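(* Let $\mathcal{P}=(\{\mathcal{E}_k:k\in K\},\{M_0,M_1\})$ be a concurrent quantum program on a Hilbert space $\mathcal{H}$ of finite dimension $d$ with orthonormal basis $\{|j\rangle\}_{j=1}^d$, and let $\rho_0$ be an initial density operator. Let $G$ be the matrix representation of the super-operator $\mathcal{G}=\frac{1}{|K|}\sum_{k\in K}\mathcal{F}_k$. Then the $d^2\times d^2$ matrix $I-G/2$ is invertible; putting $|x\rangle=(I-G/2)^{-1}(\rho_0\otimes I)|\Phi\rangle$ and $|y_j\rangle=(I\otimes\langle j|)|x\rangle\in\mathcal{H}$ for $j=1,\dots,d$, we have $\operatorname{span}\{|y_1\rangle,\dots,|y_d\rangle\}=\mathcal{H}_R$. In fact $|x\rangle=(\rho\otimes I)|\Phi\rangle$ with $\rho=\sum_{i=0}^\infty 2^{-i}\mathcal{G}^i(\rho_0)$ (a convergent series) and $\mathcal{H}_R=\operatorname{supp}(\rho)$.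
   Context: $\mathcal{H}$ is a complex Hilbert space of finite dimension $d\ge 1$. A super-operator on $\mathcal{H}$ is a completely positive linear map $\mathcal{E}$ on the space of linear operators on $\mathcal{H}$ with $\operatorname{tr}\mathcal{E}(\rho)\le\operatorname{tr}\rho$ for all positive $\rho$; every super-operator has a Kraus representation $\mathcal{E}(\rho)=\sum_i E_i\rho E_i^\dagger$. Its matrix representation (w.r.t. the basis $\{|j\rangle\}$) is the $d^2\times d^2$ matrix $\sum_i E_i\otimes E_i^*$, where $E^*$ is the entrywise complex conjugate. $|\Phi\rangle=\sum_{j=1}^d|j\rangle|j\rangle\in\mathcal{H}\otimes\mathcal{H}$. For positive semidefinite $\rho$, $\operatorname{supp}(\rho)$ is the span of eigenvectors with nonzero eigenvalues. A concurrent quantum program is a pair $\mathcal{P}=(\{\mathcal{E}_k:k\in K\},\{M_0,M_1\})$ with $K=\{1,\dots,m\}$, each $\mathcal{E}_k$ a trace-preserving super-operator on $\mathcal{H}$, and $M_0^\dagger M_0+M_1^\dagger M_1=I$. Define $\mathcal{F}_k(\rho)=\mathcal{E}_k(M_1\rho M_1^\dagger)$; for a finite string $f=s_1\cdots s_n$ over $K$, $\mathcal{F}_f=\mathcal{F}_{s_n}\circ\cdots\circ\mathcal{F}_{s_1}$ (identity for the empty string). The reachable space is $\mathcal{H}_R=\bigvee_{f\in K^*}\operatorname{supp}\mathcal{F}_f(\rho_0)$ (span of the union). *)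

theory Defs
  imports "HOL-Analysis.Analysis"
begin

text \<open>The Hilbert space H is modelled as complex^'n for a finite index type 'n
 (d = CARD('n)); operators on H are complex^'n^'n; H (x) H is complex^('n*'n)
 and d^2 x d^2 matrices are complex^('n*'n)^('n*'n).
 Complex linear spans are vec.span (span over the scalar field complex).\<close>

type_synonym 'n cmat = "complex^'n^'n"

definition adjoint :: "'n::finite cmat \<Rightarrow> 'n cmat" where
  "adjoint A = (\<chi> i j. cnj (A $ j $ i))"

definition mconj :: "'n::finite cmat \<Rightarrow> 'n cmat" where
  "mconj A = (\<chi> i j. cnj (A $ i $ j))"

definition kron :: "complex^'n::finite^'n \<Rightarrow> complex^'m::finite^'m \<Rightarrow> complex^('n\<times>'m)^('n\<times>'m)" where
  "kron A B = (\<chi> p q. A $ fst p $ fst q * B $ snd p $ snd q)"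

definition mtrace :: "'n::finite cmat \<Rightarrow> complex" where
  "mtrace A = (\<Sum>i\<in>UNIV. A $ i $ i)"

text \<open>|Phi> = sum_j |j>|j>\<close>
definition Phi :: "complex^('n::finite\<times>'n)" where
  "Phi = (\<chi> p. if fst p = snd p then 1 else 0)"

definition positive_semidef :: "'n::finite cmat \<Rightarrow> bool" where
  "positive_semidef A \<longleftrightarrow> adjoint A = A \<and>
     (\<forall>v::complex^'n. (\<Sum>i\<in>UNIV. cnj (v $ i) * (A *v v) $ i) \<in> \<real> \<and>
                        Re (\<Sum>i\<in>UNIV. cnj (v $ i) * (A *v v) $ i) \<ge> 0)"

definition density_operator :: "'n::finite cmat \<Rightarrow> bool" where
  "density_operator A \<longleftrightarrow> positive_semidef A \<and> mtrace A = 1"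

text \<open>supp(rho): span of the eigenvectors with nonzero eigenvalues\<close>
definition supp :: "'n::finite cmat \<Rightarrow> (complex^'n) set" where
  "supp A = vec.span {v. v \<noteq> 0 \<and> (\<exists>c. c \<noteq> 0 \<and> A *v v = c *s v)}"

text \<open>A super-operator given by a (finite) Kraus representation.\<close>
definition kraus_apply :: "'n::finite cmat list \<Rightarrow> 'n cmat \<Rightarrow> 'n cmat" where
  "kraus_apply Es \<rho> = (\<Sum>E\<leftarrow>Es. E ** \<rho> ** adjoint E)"

definition trace_preserving_kraus :: "'n::finite cmat list \<Rightarrow> bool" where
  "trace_preserving_kraus Es \<longleftrightarrow> (\<Sum>E\<leftarrow>Es. adjoint E ** E) = mat 1"

text \<open>Matrix representation sum_i E_i (x) E_i^*\<close>
definition superop_matrix :: "'n::finite cmat list \<Rightarrow> complex^('n\<times>'n)^('n\<times>'n)" where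
  "superop_matrix Es = (\<Sum>E\<leftarrow>Es. kron E (mconj E))"

text \<open>Concurrent program: m = |K| components, K = {1..m}, Kraus lists Es k of
  the trace-preserving super-operators E_k, measurement {M0, M1}.\<close>
definition is_concurrent_program ::
  "nat \<Rightarrow> (nat \<Rightarrow> 'n::finite cmat list) \<Rightarrow> 'n cmat \<Rightarrow> 'n cmat \<Rightarrow> bool" where
  "is_concurrent_program m Es M0 M1 \<longleftrightarrow> m \<ge> 1 \<and>
     (\<forall>k\<in>{1..m}. trace_preserving_kraus (Es k)) \<and>
     adjoint M0 ** M0 + adjoint M1 ** M1 = mat 1"

text \<open>F_k(rho) = E_k(M1 rho M1^dagger)\<close>
definition Fk :: "(nat \<Rightarrow> 'n::finite cmat list) \<Rightarrow> 'n cmat \<Rightarrow> nat \<Rightarrow> 'n cmat \<Rightarrow> 'n cmat" where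
  "Fk Es M1 k \<rho> = kraus_apply (Es k) (M1 ** \<rho> ** adjoint M1)"

text \<open>F_f = F_{s_n} o ... o F_{s_1} for f = s_1 ... s_n (identity for [])\<close>
definition Fstr :: "(nat \<Rightarrow> 'n::finite cmat list) \<Rightarrow> 'n cmat \<Rightarrow> nat list \<Rightarrow> 'n cmat \<Rightarrow> 'n cmat" where
  "Fstr Es M1 f \<rho> = fold (Fk Es M1) f \<rho>"

definition reachable_space ::
  "nat \<Rightarrow> (nat \<Rightarrow> 'n::finite cmat list) \<Rightarrow> 'n cmat \<Rightarrow> 'n cmat \<Rightarrow> (complex^'n) set" where
  "reachable_space m Es M1 \<rho>0 =
     vec.span (\<Union>f\<in>{f. set f \<subseteq> {1..m}}. supp (Fstr Es M1 f \<rho>0))"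

text \<open>G = (1/|K|) sum_k F_k, as a map and via its matrix representation\<close>
definition Gmap :: "nat \<Rightarrow> (nat \<Rightarrow> 'n::finite cmat list) \<Rightarrow> 'n cmat \<Rightarrow> 'n cmat \<Rightarrow> 'n cmat" where
  "Gmap m Es M1 \<rho> = (1 / real m) *\<^sub>R (\<Sum>k\<in>{1..m}. Fk Es M1 k \<rho>)"

text \<open>Kraus operators of F_k are E_{k,i} M1; matrix representation of G\<close>
definition Gmatrix :: "nat \<Rightarrow> (nat \<Rightarrow> 'n::finite cmat list) \<Rightarrow> 'n cmat \<Rightarrow> complex^('n\<times>'n)^('n\<times>'n)" where
  "Gmatrix m Es M1 = (1 / real m) *\<^sub>R
     (\<Sum>k\<in>{1..m}. superop_matrix (map (\<lambda>E. E ** M1) (Es k)))"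

end

theory Submission
  imports Defs
begin


definition vecm :: "'n::finite cmat \<Rightarrow> complex^('n\<times>'n)" where
  "vecm X = (\<chi> p. X $ fst p $ snd p)"

definition cinner :: "complex^'n::finite \<Rightarrow> complex^'n \<Rightarrow> complex" where
  "cinner u v = (\<Sum>i\<in>UNIV. cnj (u$i) * v$i)"

definition herm :: "'n::finite cmat \<Rightarrow> bool" where "herm A \<longleftrightarrow> adjoint A = A"

definition qf :: "'n::finite cmat \<Rightarrow> complex^'n \<Rightarrow> complex" where "qf A v = cinner v (A *v v)"

lemma psd_def2: "positive_semidef A \<longleftrightarrow> herm A \<and> (\<forall>v. qf A v \<in> \<real> \<and> Re (qf A v) \<ge> 0)"
  by (simp add: positive_semidef_def herm_def qf_def cinner_def)

lemma inner_cinner: "inner u v = Re (cinner u v)"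
  by (simp add: inner_vec_def cinner_def inner_complex_def Re_sum)

lemma cinner_adjoint: "cinner u (A *v v) = cinner (adjoint A *v u) v"
proof -
  have "cinner u (A *v v) = (\<Sum>i\<in>UNIV. \<Sum>j\<in>UNIV. cnj (u$i) * A$i$j * v$j)"
    by (simp add: cinner_def matrix_vector_mult_def sum_distrib_left mult_ac)
  also have "\<dots> = (\<Sum>j\<in>UNIV. \<Sum>i\<in>UNIV. cnj (u$i) * A$i$j * v$j)"
    by (rule sum.swap)
  also have "\<dots> = cinner (adjoint A *v u) v"
    by (simp add: cinner_def adjoint_def matrix_vector_mult_def sum_distrib_right sum_distrib_left mult_ac)
  finally show ?thesis .
qed

lemma herm_sym: "herm A \<Longrightarrow> inner u (A *v v) = inner (A *v u) v"
  by (simp add: inner_cinner cinner_adjoint herm_def)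

lemma mv_scaleR: "(A::complex^'n::finite^'m::finite) *v (r *\<^sub>R v) = r *\<^sub>R (A *v v)"
  by (simp add: matrix_vector_mult_def vec_eq_iff scaleR_sum_right)

lemma scaleR_mv: "((r *\<^sub>R A)::complex^'n::finite^'m::finite) *v v = r *\<^sub>R (A *v v)"
  by (simp add: matrix_vector_mult_def vec_eq_iff scaleR_sum_right)

lemma mv_smult: "(A::complex^'n::finite^'m::finite) *v (c *s v) = c *s (A *v v)"
  by (rule vector_scalar_commute)

lemma scaleR_smult: "r *\<^sub>R (v::complex^'n::finite) = complex_of_real r *s v"
  by (simp add: vec_eq_iff) (simp add: scaleR_conv_of_real)

lemma adjoint_mult: "adjoint (A ** B) = adjoint B ** adjoint (A::'n::finite cmat)"
  by (simp add: adjoint_def matrix_matrix_mult_def vec_eq_iff mult_ac)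

lemma adjoint_adjoint[simp]: "adjoint (adjoint A) = A"
  by (simp add: adjoint_def vec_eq_iff)

lemma adjoint_add: "adjoint (A + B) = adjoint A + adjoint B"
  by (simp add: adjoint_def vec_eq_iff)

lemma adjoint_diff: "adjoint (A - B) = adjoint A - adjoint B"
  by (simp add: adjoint_def vec_eq_iff)

lemma adjoint_scaleR: "adjoint (r *\<^sub>R A) = r *\<^sub>R adjoint A"
  by (simp add: adjoint_def vec_eq_iff)

lemma adjoint_zero[simp]: "adjoint 0 = 0"
  by (simp add: adjoint_def vec_eq_iff)

lemma cinner_add_right: "cinner u (v + w) = cinner u v + cinner u w"
  by (simp add: cinner_def algebra_simps sum.distrib)
lemma cinner_diff_right: "cinner u (v - w) = cinner u v - cinner u w"
  by (simp add: cinner_def algebra_simps sum_subtractf)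
lemma cinner_add_left: "cinner (u + v) w = cinner u w + cinner v w"
  by (simp add: cinner_def algebra_simps sum.distrib)
lemma cinner_diff_left: "cinner (u - v) w = cinner u w - cinner v w"
  by (simp add: cinner_def algebra_simps sum_subtractf)
lemma cinner_smult_right: "cinner u (c *s w) = c * cinner u w"
  by (simp add: cinner_def sum_distrib_left mult_ac)
lemma cinner_smult_left: "cinner (c *s u) w = cnj c * cinner u w"
  by (simp add: cinner_def sum_distrib_left mult_ac)
lemma cinner_scaleR_right: "cinner u (r *\<^sub>R w) = of_real r * cinner u w"
  by (simp add: scaleR_smult cinner_smult_right)
lemma cinner_axis_left: "cinner (axis a 1) w = w $ a"
proof -
  have h: "(\<lambda>i. cnj (axis a 1 $ i) * w $ i) = (\<lambda>i. if i = a then w$i else 0)"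
    by (auto simp: axis_def)
  show ?thesis unfolding cinner_def h by simp
qed

lemma mv_axis: "(A::complex^'n::finite^'m::finite) *v axis k 1 = (\<chi> i. A $ i $ k)"
  by (simp add: matrix_vector_mult_def vec_eq_iff axis_def if_distrib cong: if_cong)

lemma qf_add: "qf (A + B) v = qf A v + qf B v"
  by (simp add: qf_def matrix_vector_mult_add_rdistrib cinner_add_right)
lemma qf_diff: "qf (A - B) v = qf A v - qf B v"
  by (simp add: qf_def matrix_vector_mult_diff_rdistrib cinner_diff_right)
lemma qf_scaleR: "qf (r *\<^sub>R A) v = of_real r * qf A v"
  by (simp add: qf_def scaleR_mv cinner_scaleR_right)
lemma qf_zero[simp]: "qf 0 v = 0"
  by (simp add: qf_def cinner_def)

lemma herm_add: "herm A \<Longrightarrow> herm B \<Longrightarrow> herm (A + B)" by (simp add: herm_def adjoint_add)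
lemma herm_diff: "herm A \<Longrightarrow> herm B \<Longrightarrow> herm (A - B)" by (simp add: herm_def adjoint_diff)
lemma herm_scaleR: "herm A \<Longrightarrow> herm (r *\<^sub>R A)" by (simp add: herm_def adjoint_scaleR)

lemma psd_zero: "positive_semidef 0"
  by (simp add: psd_def2 herm_def)

lemma psd_add: "positive_semidef A \<Longrightarrow> positive_semidef B \<Longrightarrow> positive_semidef (A + B)"
  by (simp add: psd_def2 herm_add qf_add)

lemma psd_scaleR: "positive_semidef A \<Longrightarrow> r \<ge> 0 \<Longrightarrow> positive_semidef (r *\<^sub>R A)"
  by (auto simp: psd_def2 herm_scaleR qf_scaleR)

lemma psd_conj: "positive_semidef P \<Longrightarrow> positive_semidef (E ** P ** adjoint E)"
proof -
  assume P: "positive_semidef P"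
  have h: "herm (E ** P ** adjoint E)" using P
    by (simp add: psd_def2 herm_def adjoint_mult matrix_mul_assoc)
  have "qf (E ** P ** adjoint E) v = qf P (adjoint E *v v)" for v
    by (simp add: qf_def matrix_vector_mul_assoc[symmetric] cinner_adjoint)
  with P h show ?thesis by (simp add: psd_def2)
qed

lemma psd_sum_list: "(\<And>x. x \<in> set xs \<Longrightarrow> positive_semidef (f x)) \<Longrightarrow> positive_semidef (\<Sum>x\<leftarrow>xs. f x)"
  by (induction xs) (auto simp: psd_zero psd_add)

lemma psd_sum: "finite S \<Longrightarrow> (\<And>x. x \<in> S \<Longrightarrow> positive_semidef (f x)) \<Longrightarrow> positive_semidef (\<Sum>x\<in>S. f x)"
  by (induction S rule: finite_induct) (auto simp: psd_zero psd_add)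



lemma mm_add_r: "(A + B) ** (C::complex^'p::finite^'n::finite) = A ** C + B ** (C::complex^'p^'n)"
  by (vector matrix_matrix_mult_def sum.distrib[symmetric] field_simps)
lemma mm_diff_r: "(A - B) ** (C::complex^'p::finite^'n::finite) = A ** C - B ** (C::complex^'p^'n)"
  by (vector matrix_matrix_mult_def sum_subtractf[symmetric] field_simps)
lemma mm_diff_l: "(C::complex^'p::finite^'n::finite) ** (A - B) = C ** A - C ** B"
  by (vector matrix_matrix_mult_def sum_subtractf[symmetric] field_simps)
lemma mm_scaleR_r: "(r *\<^sub>R A) ** (C::complex^'p::finite^'n::finite) = r *\<^sub>R (A ** C)"
  by (simp add: matrix_matrix_mult_def vec_eq_iff scaleR_sum_right)
lemma mm_scaleR_l: "(C::complex^'p::finite^'n::finite) ** (r *\<^sub>R A) = r *\<^sub>R (C ** A)"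
  by (simp add: matrix_matrix_mult_def vec_eq_iff scaleR_sum_right)

lemma mtrace_add: "mtrace (A + B) = mtrace A + mtrace B"
  by (simp add: mtrace_def sum.distrib)
lemma mtrace_diff: "mtrace (A - B) = mtrace A - mtrace B"
  by (simp add: mtrace_def sum_subtractf)
lemma mtrace_zero[simp]: "mtrace 0 = 0"
  by (simp add: mtrace_def)
lemma mtrace_scaleR: "mtrace (r *\<^sub>R A) = of_real r * mtrace A"
  by (simp add: mtrace_def sum_distrib_left) (simp add: scaleR_conv_of_real)
lemma mtrace_sum: "finite S \<Longrightarrow> mtrace (\<Sum>x\<in>S. f x) = (\<Sum>x\<in>S. mtrace (f x))"
  by (induction S rule: finite_induct) (auto simp: mtrace_add)

lemma mtrace_comm: "mtrace (A ** B) = mtrace (B ** (A::'n::finite cmat))"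
proof -
  have "mtrace (A ** B) = (\<Sum>i\<in>UNIV. \<Sum>j\<in>UNIV. A$i$j * B$j$i)"
    by (simp add: mtrace_def matrix_matrix_mult_def)
  also have "\<dots> = (\<Sum>j\<in>UNIV. \<Sum>i\<in>UNIV. A$i$j * B$j$i)" by (rule sum.swap)
  also have "\<dots> = mtrace (B ** A)"
    by (simp add: mtrace_def matrix_matrix_mult_def mult_ac)
  finally show ?thesis .
qed

lemma mtrace_conj: "mtrace (E ** X ** adjoint E) = mtrace ((adjoint E ** E) ** X)"
  by (metis matrix_mul_assoc mtrace_comm)

lemma mtrace_kraus: "mtrace (kraus_apply Es X) = mtrace ((\<Sum>E\<leftarrow>Es. adjoint E ** E) ** X)"
  by (induction Es) (simp_all add: kraus_apply_def mtrace_add mm_add_r mtrace_conj)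

lemma mtrace_kraus_tp: "trace_preserving_kraus Es \<Longrightarrow> mtrace (kraus_apply Es X) = mtrace X"
  by (simp add: mtrace_kraus trace_preserving_kraus_def)

lemma qf_axis: "qf P (axis i 1) = P $ i $ i"
  by (simp add: qf_def mv_axis cinner_axis_left)

lemma psd_diag: "positive_semidef P \<Longrightarrow> P$i$i \<in> \<real> \<and> Re (P$i$i) \<ge> 0"
  by (metis psd_def2 qf_axis)

lemma mtrace_Re: "Re (mtrace P) = (\<Sum>i\<in>UNIV. Re (P$i$i))"
  by (simp add: mtrace_def)

lemma psd_trace: "positive_semidef P \<Longrightarrow> mtrace P \<in> \<real> \<and> Re (mtrace P) \<ge> 0"
  unfolding mtrace_def using psd_diag[of P]
  by (auto intro!: sum_in_Reals sum_nonneg)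

lemma psd_diag_le: "positive_semidef P \<Longrightarrow> Re (P$i$i) \<le> Re (mtrace P)"
  unfolding mtrace_Re using psd_diag[of P]
  by (intro member_le_sum) auto

lemma real_cmod: "z \<in> \<real> \<Longrightarrow> Re z \<ge> 0 \<Longrightarrow> cmod z = Re z"
  by (metis Reals_cases Re_complex_of_real abs_of_nonneg norm_of_real)

lemma psd_entry_le: assumes P: "positive_semidef P" shows "cmod (P$a$b) \<le> Re (mtrace P)"
proof (cases "a = b")
  case True
  then show ?thesis using psd_diag[OF P, of a] psd_diag_le[OF P, of a] real_cmod by simp
next
  case False
  define c where "c = P$a$b"
  show ?thesis
  proof (cases "c = 0")
    case True then show ?thesis using psd_trace[OF P] by (simp add: c_def)
  next
    case c0: False
    have hc: "cmod c > 0" using c0 by simp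
    define s where "s = cnj c / of_real (cmod c)"
    define v where "v = axis a 1 - s *s axis b (1::complex)"
    have herm: "P$b$a = cnj c"
      using P unfolding psd_def2 herm_def adjoint_def c_def
      by (metis (no_types, lifting) complex_cnj_cnj vec_lambda_beta)
    have q: "qf P v = P$a$a - s * c - cnj s * P$b$a + cnj s * s * P$b$b"
      by (simp add: qf_def v_def matrix_vector_mult_diff_distrib mv_smult mv_axis
          cinner_diff_left cinner_smult_left cinner_axis_left algebra_simps c_def)
    have sc: "s * c = of_real (cmod c)"
      using hc by (simp add: s_def field_simps complex_norm_square[symmetric] power2_eq_square mult.commute)
    have ss: "cnj s * s = 1"
      using hc by (simp add: s_def field_simps complex_norm_square[symmetric] power2_eq_square)
    have cs: "cnj s * P$b$a = of_real (cmod c)"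
      using sc by (metis herm complex_cnj_complex_of_real complex_cnj_mult)
    have "qf P v = P$a$a + P$b$b - 2 * of_real (cmod c)"
      using q sc ss cs by simp
    then have "Re (qf P v) = Re (P$a$a) + Re (P$b$b) - 2 * cmod c" by simp
    moreover have "Re (qf P v) \<ge> 0" using P by (simp add: psd_def2)
    moreover have "Re (P$a$a) \<le> Re (mtrace P)" "Re (P$b$b) \<le> Re (mtrace P)"
      using psd_diag_le[OF P] by auto
    ultimately show ?thesis by (simp add: c_def)
  qed
qed

lemma norm_mat_le: "norm (X::complex^'n::finite^'m::finite) \<le> (\<Sum>i\<in>UNIV. \<Sum>j\<in>UNIV. cmod (X$i$j))"
proof -
  have "norm X \<le> (\<Sum>i\<in>UNIV. norm (X$i))"
    by (simp add: norm_vec_def L2_set_le_sum)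
  also have "\<dots> \<le> (\<Sum>i\<in>UNIV. \<Sum>j\<in>UNIV. cmod (X$i$j))"
    by (intro sum_mono) (simp add: norm_vec_def L2_set_le_sum)
  finally show ?thesis .
qed

lemma norm_mat_bound: assumes "\<And>i j. cmod (X$i$j) \<le> B"
  shows "norm (X::complex^'n::finite^'m::finite) \<le> real CARD('m) * (real CARD('n) * B)"
proof -
  have "norm X \<le> (\<Sum>i\<in>UNIV. norm (X$i))"
    by (simp add: norm_vec_def L2_set_le_sum)
  also have "\<dots> \<le> (\<Sum>i\<in>(UNIV::'m set). real CARD('n) * B)"
  proof (intro sum_mono)
    fix i
    have "norm (X$i) \<le> (\<Sum>j\<in>UNIV. cmod (X$i$j))"
      by (simp add: norm_vec_def L2_set_le_sum)
    also have "\<dots> \<le> (\<Sum>j\<in>(UNIV::'n set). B)"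
      by (intro sum_mono assms)
    finally show "norm (X$i) \<le> real CARD('n) * B" by simp
  qed
  finally show ?thesis by simp
qed

lemma psd_norm_le: assumes "positive_semidef (P::'n::finite cmat)"
  shows "norm P \<le> real CARD('n) * (real CARD('n) * Re (mtrace P))"
  by (rule norm_mat_bound) (rule psd_entry_le[OF assms])



lemma kraus_add: "kraus_apply Es (X + Y) = kraus_apply Es X + kraus_apply Es Y"
  by (induction Es) (simp_all add: kraus_apply_def matrix_add_ldistrib mm_add_r algebra_simps)

lemma kraus_scaleR: "kraus_apply Es (r *\<^sub>R X) = r *\<^sub>R kraus_apply Es X"
  by (induction Es) (simp_all add: kraus_apply_def mm_scaleR_l mm_scaleR_r scaleR_add_right)

lemma Fk_add: "Fk Es M1 k (X + Y) = Fk Es M1 k X + Fk Es M1 k Y"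
  by (simp add: Fk_def matrix_add_ldistrib mm_add_r kraus_add)

lemma Fk_scaleR: "Fk Es M1 k (r *\<^sub>R X) = r *\<^sub>R Fk Es M1 k X"
  by (simp add: Fk_def mm_scaleR_l mm_scaleR_r kraus_scaleR)

lemma linear_Fk: "linear (Fk Es M1 k)"
  by (rule linearI) (simp_all add: Fk_add Fk_scaleR)

lemma Gmap_add: "Gmap m Es M1 (X + Y) = Gmap m Es M1 X + Gmap m Es M1 Y"
  by (simp add: Gmap_def Fk_add sum.distrib scaleR_add_right)

lemma Gmap_scaleR: "Gmap m Es M1 (r *\<^sub>R X) = r *\<^sub>R Gmap m Es M1 X"
  by (simp add: Gmap_def Fk_scaleR scaleR_sum_right[symmetric])

lemma linear_Gmap: "linear (Gmap m Es M1)"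
  by (rule linearI) (simp_all add: Gmap_add Gmap_scaleR)

lemma Gmap_diff: "Gmap m Es M1 (X - Y) = Gmap m Es M1 X - Gmap m Es M1 Y"
  using linear_diff[OF linear_Gmap] .

lemma Fk_psd: "positive_semidef X \<Longrightarrow> positive_semidef (Fk Es M1 k X)"
  unfolding Fk_def kraus_apply_def by (intro psd_sum_list psd_conj)

lemma Gmap_psd: "positive_semidef X \<Longrightarrow> positive_semidef (Gmap m Es M1 X)"
  unfolding Gmap_def by (intro psd_scaleR psd_sum Fk_psd) auto

lemma Gmap_pow_psd: "positive_semidef X \<Longrightarrow> positive_semidef ((Gmap m Es M1 ^^ i) X)"
  by (induction i) (auto intro: Gmap_psd)

lemma Fk_trace:
  assumes tp: "trace_preserving_kraus (Es k)" and M: "adjoint M0 ** M0 + adjoint M1 ** M1 = mat 1"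
    and X: "positive_semidef X"
  shows "Re (mtrace (Fk Es M1 k X)) \<le> Re (mtrace X)"
proof -
  have "mtrace (Fk Es M1 k X) = mtrace (M1 ** X ** adjoint M1)"
    by (simp add: Fk_def mtrace_kraus_tp[OF tp])
  also have "\<dots> = mtrace ((adjoint M1 ** M1) ** X)" by (rule mtrace_conj)
  also have "adjoint M1 ** M1 = mat 1 - adjoint M0 ** M0" using M by (simp add: algebra_simps)
  also have "mtrace ((mat 1 - adjoint M0 ** M0) ** X) = mtrace X - mtrace (M0 ** X ** adjoint M0)"
    by (simp add: mm_diff_r mtrace_diff mtrace_conj)
  finally have "Re (mtrace (Fk Es M1 k X)) = Re (mtrace X) - Re (mtrace (M0 ** X ** adjoint M0))"
    by simp
  moreover have "Re (mtrace (M0 ** X ** adjoint M0)) \<ge> 0"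
    using psd_trace[OF psd_conj[OF X]] by blast
  ultimately show ?thesis by linarith
qed

lemma Gmap_trace:
  assumes P: "is_concurrent_program m Es M0 M1" and X: "positive_semidef X"
  shows "Re (mtrace (Gmap m Es M1 X)) \<le> Re (mtrace X)"
proof -
  have m: "m \<ge> 1" and tp: "\<And>k. k \<in> {1..m} \<Longrightarrow> trace_preserving_kraus (Es k)"
    and M: "adjoint M0 ** M0 + adjoint M1 ** M1 = mat 1"
    using P by (auto simp: is_concurrent_program_def)
  have "Re (mtrace (Gmap m Es M1 X)) = (1 / real m) * (\<Sum>k\<in>{1..m}. Re (mtrace (Fk Es M1 k X)))"
    by (simp add: Gmap_def mtrace_scaleR mtrace_sum)
  also have "\<dots> \<le> (1 / real m) * (\<Sum>k\<in>{1..m}. Re (mtrace X))"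
    by (intro mult_left_mono sum_mono Fk_trace[OF tp M X]) auto
  also have "\<dots> = Re (mtrace X)" using m by simp
  finally show ?thesis .
qed

lemma Gmap_pow_trace:
  assumes P: "is_concurrent_program m Es M0 M1" and X: "positive_semidef X"
  shows "Re (mtrace ((Gmap m Es M1 ^^ i) X)) \<le> Re (mtrace X)"
proof (induction i)
  case (Suc i)
  have "Re (mtrace ((Gmap m Es M1 ^^ Suc i) X)) \<le> Re (mtrace ((Gmap m Es M1 ^^ i) X))"
    using Gmap_trace[OF P Gmap_pow_psd[OF X]] by simp
  then show ?case using Suc by linarith
qed simp

lemma Gmap_pow_norm:
  assumes P: "is_concurrent_program m Es M0 M1" and X: "positive_semidef (X::'n::finite cmat)"
  shows "norm ((Gmap m Es M1 ^^ i) X) \<le> real CARD('n) * (real CARD('n) * Re (mtrace X))"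
proof -
  have "norm ((Gmap m Es M1 ^^ i) X) \<le> real CARD('n) * (real CARD('n) * Re (mtrace ((Gmap m Es M1 ^^ i) X)))"
    by (rule psd_norm_le[OF Gmap_pow_psd[OF X]])
  also have "\<dots> \<le> real CARD('n) * (real CARD('n) * Re (mtrace X))"
    by (intro mult_left_mono Gmap_pow_trace[OF P X]) auto
  finally show ?thesis .
qed

lemma Gmap_pow_entry:
  assumes P: "is_concurrent_program m Es M0 M1" and X: "positive_semidef (X::'n::finite cmat)"
  shows "cmod ((Gmap m Es M1 ^^ i) X $ a $ b) \<le> Re (mtrace X)"
  using psd_entry_le[OF Gmap_pow_psd[OF X]] Gmap_pow_trace[OF P X] order_trans by blast

lemma Fstr_Nil[simp]: "Fstr Es M1 [] X = X" by (simp add: Fstr_def)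
lemma Fstr_snoc: "Fstr Es M1 (f @ [k]) X = Fk Es M1 k (Fstr Es M1 f X)"
  by (simp add: Fstr_def)

lemma Fstr_psd: "positive_semidef X \<Longrightarrow> positive_semidef (Fstr Es M1 f X)"
  by (induction f rule: rev_induct) (auto simp: Fstr_snoc Fk_psd)



lemma sum_pair: "(\<Sum>p\<in>(UNIV::('a::finite\<times>'b::finite) set). f p) = (\<Sum>a\<in>UNIV. \<Sum>b\<in>UNIV. f (a,b))"
  by (simp add: UNIV_Times_UNIV[symmetric] sum.cartesian_product del: UNIV_Times_UNIV)

lemma vecm_add: "vecm (X + Y) = vecm X + vecm Y" by (simp add: vecm_def vec_eq_iff)
lemma vecm_diff: "vecm (X - Y) = vecm X - vecm Y" by (simp add: vecm_def vec_eq_iff)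
lemma vecm_scaleR: "vecm (r *\<^sub>R X) = r *\<^sub>R vecm X" by (simp add: vecm_def vec_eq_iff)
lemma vecm_zero: "vecm 0 = 0" by (simp add: vecm_def vec_eq_iff)

lemma kron_Phi: "kron X (mat 1) *v Phi = vecm X"
proof -
  have "(kron X (mat 1) *v Phi) $ (a,b) = X$a$b" for a b
  proof -
    have "(kron X (mat 1) *v Phi) $ (a,b) = (\<Sum>c\<in>UNIV. \<Sum>d\<in>UNIV. X$a$c * (if b = d then 1 else 0) * (if c = d then 1 else 0))"
      by (simp add: matrix_vector_mult_def kron_def Phi_def sum_pair mat_def)
    also have "\<dots> = (\<Sum>c\<in>UNIV. \<Sum>d\<in>UNIV. if d = b then (if c = b then X$a$c else 0) else 0)"
      by (intro sum.cong refl) auto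
    also have "\<dots> = (\<Sum>c\<in>UNIV. if c = b then X$a$c else 0)"
      by simp
    also have "\<dots> = X$a$b" by simp
    finally show ?thesis .
  qed
  then show ?thesis by (simp add: vec_eq_iff vecm_def)
qed

lemma kron_vecm: "kron E (mconj E) *v vecm X = vecm (E ** X ** adjoint E)"
proof -
  have "(kron E (mconj E) *v vecm X) $ (a,b) = (E ** X ** adjoint E)$a$b" for a b
  proof -
    have "(kron E (mconj E) *v vecm X) $ (a,b) = (\<Sum>c\<in>UNIV. \<Sum>d\<in>UNIV. E$a$c * cnj (E$b$d) * X$c$d)"
      by (simp add: matrix_vector_mult_def kron_def mconj_def vecm_def sum_pair)
    also have "\<dots> = (\<Sum>d\<in>UNIV. \<Sum>c\<in>UNIV. E$a$c * cnj (E$b$d) * X$c$d)" by (rule sum.swap)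
    also have "\<dots> = (E ** X ** adjoint E)$a$b"
      by (simp add: matrix_matrix_mult_def adjoint_def sum_distrib_right sum_distrib_left mult_ac)
    finally show ?thesis .
  qed
  then show ?thesis by (simp add: vec_eq_iff vecm_def)
qed

lemma superop_vecm: "superop_matrix (map (\<lambda>E. E ** M1) Es) *v vecm X = vecm (kraus_apply Es (M1 ** X ** adjoint M1))"
proof (induction Es)
  case Nil then show ?case by (simp add: superop_matrix_def kraus_apply_def vecm_zero)
next
  case (Cons E Es)
  have "kron (E ** M1) (mconj (E ** M1)) *v vecm X = vecm (E ** (M1 ** X ** adjoint M1) ** adjoint E)"
    by (simp add: kron_vecm adjoint_mult matrix_mul_assoc)
  with Cons show ?case
    by (simp add: superop_matrix_def kraus_apply_def matrix_vector_mult_add_rdistrib vecm_add)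
qed

lemma sum_mv: "finite S \<Longrightarrow> (\<Sum>k\<in>S. A k) *v (v::complex^'n::finite) = (\<Sum>k\<in>S. (A k :: complex^'n^'m::finite) *v v)"
  by (induction S rule: finite_induct) (simp_all add: matrix_vector_mult_add_rdistrib)

lemma Gmatrix_vecm: "Gmatrix m Es M1 *v vecm X = vecm (Gmap m Es M1 X)"
proof -
  have "vecm (Gmap m Es M1 X) = (1 / real m) *\<^sub>R (\<Sum>k\<in>{1..m}. vecm (Fk Es M1 k X))"
    by (simp add: Gmap_def vecm_scaleR linear_sum[of vecm] linearI vecm_add)
  then show ?thesis
    by (simp add: Gmatrix_def scaleR_mv sum_mv superop_vecm Fk_def)
qed

definition outer :: "complex^'n::finite \<Rightarrow> complex^'n \<Rightarrow> 'n cmat" where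
  "outer p q = (\<chi> x y. p$x * cnj (q$y))"

lemma cinner_cnj: "cinner w v = cnj (cinner v w)"
  by (simp add: cinner_def mult.commute)

lemma outer_psd: "positive_semidef (outer w w)"
proof -
  have h: "herm (outer w w)" by (simp add: herm_def adjoint_def outer_def vec_eq_iff mult.commute)
  have e: "outer w w *v v = cinner w v *s w" for v
    by (simp add: outer_def matrix_vector_mult_def vec_eq_iff cinner_def sum_distrib_left mult_ac)
  have "qf (outer w w) v = of_real ((cmod (cinner v w))^2)" for v
  proof -
    have "qf (outer w w) v = cinner v w * cnj (cinner v w)"
      by (simp add: qf_def e cinner_smult_right cinner_cnj[of w v] mult.commute)
    also have "\<dots> = of_real ((cmod (cinner v w))^2)" by (rule complex_norm_square[symmetric])
    finally show ?thesis .
  qed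
  with h show ?thesis by (simp add: psd_def2)
qed

lemma polar4: "(a::complex) * d = (1/4) * ((a + b) * (c + d) - (a - b) * (c - d)
   + \<i> * ((a + \<i> * b) * (c - \<i> * d)) - \<i> * ((a - \<i> * b) * (c + \<i> * d)))"
  by (simp add: algebra_simps)

lemma outer_polar: "vecm (outer p q) = (1/4) *s (vecm (outer (p + q) (p + q)) - vecm (outer (p - q) (p - q))
   + \<i> *s vecm (outer (p + \<i> *s q) (p + \<i> *s q)) - \<i> *s vecm (outer (p - \<i> *s q) (p - \<i> *s q)))"
  apply (simp add: vec_eq_iff vecm_def outer_def)
  apply (intro allI)
  subgoal for a b using polar4[of "p$a" "q$a" "cnj (p$b)" "cnj (q$b)"] by (simp add: field_simps)
  done



definition ebnd :: "(nat \<Rightarrow> complex^'k::finite) \<Rightarrow> bool" where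
  "ebnd f \<longleftrightarrow> (\<exists>B. \<forall>i p. cmod (f i $ p) \<le> B)"

lemma ebnd_add: "ebnd f \<Longrightarrow> ebnd g \<Longrightarrow> ebnd (\<lambda>i. f i + g i)"
  unfolding ebnd_def
proof (elim exE)
  fix B1 B2 assume 1: "\<forall>i p. cmod (f i $ p) \<le> B1" and 2: "\<forall>i p. cmod (g i $ p) \<le> B2"
  have "cmod ((f i + g i) $ p) \<le> B1 + B2" for i p
    using norm_triangle_le[of "f i $ p" "g i $ p"] 1 2 by (simp add: add_mono order_trans)
  then show "\<exists>B. \<forall>i p. cmod ((f i + g i) $ p) \<le> B" by blast
qed

lemma ebnd_smult: "ebnd f \<Longrightarrow> ebnd (\<lambda>i. c *s f i)"
  unfolding ebnd_def
proof (elim exE)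
  fix B assume 1: "\<forall>i p. cmod (f i $ p) \<le> B"
  have "cmod ((c *s f i) $ p) \<le> cmod c * B" for i p
    using 1 by (simp add: norm_mult mult_left_mono)
  then show "\<exists>B. \<forall>i p. cmod ((c *s f i) $ p) \<le> B" by blast
qed

lemma ebnd_diff: "ebnd f \<Longrightarrow> ebnd g \<Longrightarrow> ebnd (\<lambda>i. f i - g i)"
proof -
  assume "ebnd f" "ebnd g"
  then have "ebnd (\<lambda>i. f i + (-1) *s g i)" by (intro ebnd_add ebnd_smult)
  then show ?thesis by (simp add: vec_eq_iff)
qed

lemma ebnd_zero: "ebnd (\<lambda>i. 0)"
  unfolding ebnd_def by auto

lemma ebnd_sum: "finite S \<Longrightarrow> (\<And>x. x \<in> S \<Longrightarrow> ebnd (f x)) \<Longrightarrow> ebnd (\<lambda>i. \<Sum>x\<in>S. f x i)"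
  by (induction S rule: finite_induct) (auto intro: ebnd_zero ebnd_add)

lemma pow_add: "(((*v) (G::complex^'k::finite^'k)) ^^ i) (x + y) = ((*v) G ^^ i) x + ((*v) G ^^ i) y"
  by (induction i) (simp_all add: matrix_vector_right_distrib)
lemma pow_smult: "(((*v) (G::complex^'k::finite^'k)) ^^ i) (c *s x) = c *s ((*v) G ^^ i) x"
  by (induction i) (simp_all add: mv_smult)
lemma pow_scaleR: "(((*v) (G::complex^'k::finite^'k)) ^^ i) (c *\<^sub>R x) = c *\<^sub>R ((*v) G ^^ i) x"
  by (induction i) (simp_all add: mv_scaleR)
lemma pow_diff: "(((*v) (G::complex^'k::finite^'k)) ^^ i) (x - y) = ((*v) G ^^ i) x - ((*v) G ^^ i) y"
  by (induction i) (simp_all add: matrix_vector_mult_diff_distrib)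
lemma pow_zero: "(((*v) (G::complex^'k::finite^'k)) ^^ i) 0 = 0"
  by (induction i) simp_all
lemma pow_sum: "finite S \<Longrightarrow> (((*v) (G::complex^'k::finite^'k)) ^^ i) (\<Sum>x\<in>S. f x) = (\<Sum>x\<in>S. ((*v) G ^^ i) (f x))"
  by (induction S rule: finite_induct) (simp_all add: pow_add pow_zero)

lemma pow_vecm: "((*v) (Gmatrix m Es M1) ^^ i) (vecm X) = vecm ((Gmap m Es M1 ^^ i) X)"
  by (induction i) (simp_all add: Gmatrix_vecm)

lemma ebnd_psd:
  assumes P: "is_concurrent_program m Es M0 M1" and X: "positive_semidef X"
  shows "ebnd (\<lambda>i. ((*v) (Gmatrix m Es M1) ^^ i) (vecm X))"
  unfolding ebnd_def pow_vecm
  using Gmap_pow_entry[OF P X] by (auto simp: vecm_def)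

lemma ebnd_outer:
  assumes P: "is_concurrent_program m Es M0 M1"
  shows "ebnd (\<lambda>i. ((*v) (Gmatrix m Es M1) ^^ i) (vecm (outer p q)))"
  apply (subst outer_polar)
  unfolding pow_smult pow_add pow_diff
  by (intro ebnd_smult ebnd_add ebnd_diff ebnd_psd[OF P] outer_psd)

lemma axis_vecm: "axis (a,b) (1::complex) = vecm (outer (axis a 1) (axis b 1))"
  unfolding vec_eq_iff vecm_def outer_def axis_def by auto

lemma ebnd_all:
  assumes P: "is_concurrent_program m Es M0 M1"
  shows "ebnd (\<lambda>i. ((*v) (Gmatrix m Es M1) ^^ i) z)"
proof -
  have "z = (\<Sum>p\<in>UNIV. z$p *s axis p 1)" by (simp add: basis_expansion)
  also have "\<dots> = (\<Sum>p\<in>UNIV. z$p *s vecm (outer (axis (fst p) 1) (axis (snd p) 1)))"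
    by (intro sum.cong refl) (metis axis_vecm prod.collapse)
  finally have z: "z = \<dots>" .
  show ?thesis
    apply (subst z)
    apply (simp only: pow_sum[OF finite] pow_smult)
    apply (intro ebnd_sum ebnd_smult ebnd_outer[OF P])
    apply simp_all
    done
qed

lemma A_inj:
  assumes P: "is_concurrent_program m Es M0 M1"
    and z: "((mat 1 :: complex^('n::finite\<times>'n)^('n\<times>'n)) - (1/2::real) *\<^sub>R Gmatrix m Es M1) *v z = 0"
  shows "z = 0"
proof -
  let ?G = "Gmatrix m Es M1"
  have "z - (1/2::real) *\<^sub>R (?G *v z) = 0"
    using z by (simp add: matrix_vector_mult_diff_rdistrib scaleR_mv)
  then have "z = (1/2::real) *\<^sub>R (?G *v z)" by simp
  then have "2 *\<^sub>R z = 2 *\<^sub>R ((1/2::real) *\<^sub>R (?G *v z))" by simp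
  then have Gz: "?G *v z = 2 *\<^sub>R z" by simp
  have pw: "((*v) ?G ^^ i) z = (2^i) *\<^sub>R z" for i
    by (induction i) (simp_all add: mv_scaleR Gz)
  obtain B where B: "\<And>i p. cmod ((((*v) ?G ^^ i) z) $ p) \<le> B"
    using ebnd_all[OF P, of z] unfolding ebnd_def by blast
  show ?thesis
  proof (rule ccontr)
    assume "z \<noteq> 0"
    then obtain p where zp: "z $ p \<noteq> 0" by (auto simp: vec_eq_iff)
    then have c: "cmod (z$p) > 0" by simp
    obtain n where n: "B / cmod (z$p) < 2^n" using real_arch_pow[of 2 "B / cmod (z$p)"] by auto
    have "2^n * cmod (z$p) \<le> B" using B[of n p] by (simp add: pw norm_scaleR)
    then have "2^n \<le> B / cmod (z$p)" using c by (simp add: field_simps)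
    with n show False by simp
  qed
qed

lemma A_invertible:
  assumes P: "is_concurrent_program m Es M0 M1"
  shows "invertible ((mat 1 :: complex^('n::finite\<times>'n)^('n\<times>'n)) - (1/2::real) *\<^sub>R Gmatrix m Es M1)"
  unfolding invertible_left_inverse matrix_left_invertible_ker
  using A_inj[OF P] by blast

lemma matrix_inv_left: "invertible (A::'a::field^'n::finite^'n) \<Longrightarrow> matrix_inv A ** A = mat 1"
  unfolding invertible_def matrix_inv_def by (rule someI2_ex) auto



lemma quad_nonneg:
  fixes a b :: real
  assumes h: "\<And>t. t > 0 \<Longrightarrow> 0 \<le> a * t + b * t^2"
  shows "0 \<le> a"
proof (rule ccontr)
  assume "\<not> 0 \<le> a"
  then have a: "a < 0" by simp
  define t where "t = - a / (\<bar>b\<bar> + 1)"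
  have t: "t > 0" unfolding t_def by (rule divide_pos_pos) (use a in auto)
  have "b * t \<le> \<bar>b\<bar> * t" using t by (simp add: mult_right_mono)
  also have "\<bar>b\<bar> * t < - a"
    using a by (simp add: t_def field_simps)
  finally have "a + b * t < 0" by simp
  then have "t * (a + b * t) < 0" using t by (simp add: mult_pos_neg)
  moreover have "0 \<le> a * t + b * t^2" using h[OF t] .
  ultimately show False by (simp add: power2_eq_square algebra_simps)
qed

lemma vsub_sub: "vec.subspace (S::(complex^'n::finite) set) \<Longrightarrow> subspace S"
  unfolding subspace_def vec.subspace_def by (simp add: scaleR_smult)

lemma range_vsub: "vec.subspace (range ((*v) (A::complex^'n::finite^'m::finite)))"
  unfolding vec.subspace_def
  by (auto simp: mv_smult[symmetric] matrix_vector_right_distrib[symmetric] intro: range_eqI[where x=0])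

lemma linear_mv: "linear ((*v) (A::complex^'n::finite^'m::finite))"
  by (rule linearI) (simp_all add: matrix_vector_right_distrib mv_scaleR)

lemma inner_quad: "inner w ((P::complex^'n::finite^'n) *v w) = Re (qf P w)"
  by (simp add: qf_def inner_cinner)

lemma expand_quad:
  assumes "herm (P::complex^'n::finite^'n)"
  shows "inner (v + t *\<^sub>R u) (P *v (v + t *\<^sub>R u))
    = inner v (P *v v) + 2 * t * inner u (P *v v) + t^2 * inner u (P *v u)"
proof -
  have "inner v (P *v u) = inner u (P *v v)"
    using herm_sym[OF assms, of v u] by (simp add: inner_commute)
  then show ?thesis
    by (simp add: matrix_vector_right_distrib mv_scaleR inner_add_left inner_add_right
        power2_eq_square algebra_simps)
qed

lemma psd_ker:
  assumes P: "positive_semidef P" and q: "Re (qf P v) = 0"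
  shows "P *v v = 0"
proof -
  have h: "herm P" using P by (simp add: psd_def2)
  define u where "u = - (P *v v)"
  have "0 \<le> (-2 * inner (P *v v) (P *v v)) * t + inner u (P *v u) * t^2" if "t > 0" for t
  proof -
    have "0 \<le> Re (qf P (v + t *\<^sub>R u))" using P by (simp add: psd_def2)
    also have "\<dots> = inner v (P *v v) + 2 * t * inner u (P *v v) + t^2 * inner u (P *v u)"
      using expand_quad[OF h] inner_quad by metis
    also have "\<dots> = (-2 * inner (P *v v) (P *v v)) * t + inner u (P *v u) * t^2"
      using q by (simp add: inner_quad u_def algebra_simps)
    finally show ?thesis .
  qed
  from quad_nonneg[OF this] have "inner (P *v v) (P *v v) \<le> 0" by simp
  then show ?thesis by (metis inner_ge_zero inner_eq_zero_iff order.antisym)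
qed

lemma range_incl:
  assumes hQ: "herm Q" and hP: "herm P" and ker: "\<And>v. Q *v v = 0 \<Longrightarrow> P *v v = 0"
  shows "range ((*v) (P::complex^'n::finite^'n)) \<subseteq> range ((*v) Q)"
proof
  fix w assume "w \<in> range ((*v) P)"
  then obtain u where w: "w = P *v u" by auto
  have sQ: "subspace (range ((*v) Q))" by (rule vsub_sub[OF range_vsub])
  obtain y z where y: "y \<in> span (range ((*v) Q))" and z: "\<And>x. x \<in> span (range ((*v) Q)) \<Longrightarrow> orthogonal z x"
    and wyz: "w = y + z"
    by (rule orthogonal_subspace_decomp_exists[of "range ((*v) Q)" w]) blast
  have sp: "span (range ((*v) Q)) = range ((*v) Q)" using sQ by simp
  have "inner (Q *v z) (Q *v z) = inner z (Q *v (Q *v z))"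
    using herm_sym[OF hQ] by simp
  also have "\<dots> = 0" using z[of "Q *v (Q *v z)"] sp by (simp add: orthogonal_def)
  finally have "Q *v z = 0" by simp
  then have Pz: "P *v z = 0" by (rule ker)
  have "inner z w = inner (P *v z) u" using herm_sym[OF hP] w by simp
  then have "inner z w = 0" using Pz by simp
  moreover have "inner z y = 0" using z[OF y] by (simp add: orthogonal_def)
  ultimately have "inner z z = 0" using wyz by (simp add: inner_add_right)
  then have "z = 0" by simp
  then show "w \<in> range ((*v) Q)" using wyz y sp by simp
qed

lemma eigen_exists:
  assumes h: "herm P" and Z: "subspace Z" and inv: "\<And>z. z \<in> Z \<Longrightarrow> (P::complex^'n::finite^'n) *v z \<in> Z"
    and z0: "z0 \<in> Z" "z0 \<noteq> 0"
  shows "\<exists>v\<in>Z. v \<noteq> 0 \<and> (\<exists>l::real. P *v v = l *\<^sub>R v)"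
proof -
  define K where "K = Z \<inter> sphere 0 1"
  have cK: "compact K" unfolding K_def
    by (intro closed_Int_compact closed_subspace Z compact_sphere)
  have nK: "z0 /\<^sub>R norm z0 \<in> K" using z0 Z by (simp add: K_def subspace_scale)
  have bl: "bounded_linear ((*v) P)" using linear_mv linear_conv_bounded_linear by blast
  have cont: "continuous_on K (\<lambda>v. inner v (P *v v))"
    by (rule continuous_on_inner[OF continuous_on_id linear_continuous_on[OF bl]])
  have ne: "K \<noteq> {}" using nK by blast
  have ex: "\<exists>v\<in>K. \<forall>y\<in>K. inner y (P *v y) \<le> inner v (P *v v)"
    by (rule continuous_attains_sup[OF cK ne cont])
  then obtain v where vK: "v \<in> K" and vmax0: "\<forall>y\<in>K. inner y (P *v y) \<le> inner v (P *v v)"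
    by (rule bexE)
  have vmax: "\<And>y. y \<in> K \<Longrightarrow> inner y (P *v y) \<le> inner v (P *v v)" using vmax0 by simp
  define l where "l = inner v (P *v v)"
  have vZ: "v \<in> Z" and nv: "norm v = 1" using vK by (auto simp: K_def)
  have bound: "inner w (P *v w) \<le> l * inner w w" if wZ: "w \<in> Z" for w
  proof (cases "w = 0")
    case True then show ?thesis by simp
  next
    case False
    then have nw: "norm w > 0" by simp
    have "w /\<^sub>R norm w \<in> K" using wZ False by (simp add: K_def subspace_scale[OF Z])
    then have le: "inner (w /\<^sub>R norm w) (P *v (w /\<^sub>R norm w)) \<le> l" using vmax l_def by blast
    have eq: "inner w (P *v w) = (norm w)^2 * inner (w /\<^sub>R norm w) (P *v (w /\<^sub>R norm w))"
      using nw by (simp add: mv_scaleR power2_eq_square field_simps)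
    have "inner w (P *v w) \<le> (norm w)^2 * l"
      unfolding eq by (rule mult_left_mono[OF le]) simp
    then show ?thesis by (simp add: dot_square_norm mult.commute)
  qed
  define u where "u = P *v v - l *\<^sub>R v"
  have uZ: "u \<in> Z" unfolding u_def using Z inv vZ by (simp add: subspace_diff subspace_scale)
  have "0 \<le> (-2 * inner u u) * t + (l * inner u u - inner u (P *v u)) * t^2" if "t > 0" for t
  proof -
    have wZ: "v + t *\<^sub>R u \<in> Z" using Z vZ uZ by (simp add: subspace_add subspace_scale)
    have b: "inner (v + t *\<^sub>R u) (P *v (v + t *\<^sub>R u)) \<le> l * inner (v + t *\<^sub>R u) (v + t *\<^sub>R u)"
      by (rule bound[OF wZ])
    have e1: "inner (v + t *\<^sub>R u) (P *v (v + t *\<^sub>R u))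
        = l + 2 * t * inner u (P *v v) + t^2 * inner u (P *v u)"
      using expand_quad[OF h] l_def by simp
    have vv: "inner v v = 1" using nv by (simp add: dot_square_norm)
    have e2: "inner (v + t *\<^sub>R u) (v + t *\<^sub>R u) = 1 + 2 * t * inner u v + t^2 * inner u u"
      using vv by (simp add: inner_add_left inner_add_right inner_commute[of v u] power2_eq_square algebra_simps)
    have e3: "inner u (P *v v) = inner u u + l * inner u v"
      by (simp add: u_def inner_diff_right inner_diff_left algebra_simps)
    have "l + 2 * t * (inner u u + l * inner u v) + t^2 * inner u (P *v u) \<le> l * (1 + 2 * t * inner u v + t^2 * inner u u)"
      using b e1 e2 e3 by simp
    then show ?thesis by (simp add: algebra_simps)
  qed
  from quad_nonneg[OF this] have "inner u u \<le> 0" by simp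
  then have "u = 0" by (metis inner_ge_zero inner_eq_zero_iff order.antisym)
  then have "P *v v = l *\<^sub>R v" by (simp add: u_def)
  moreover have "v \<noteq> 0" using nv by auto
  ultimately show ?thesis using vZ by blast
qed

lemma supp_range:
  assumes h: "herm (P::complex^'n::finite^'n)"
  shows "supp P = range ((*v) P)"
proof -
  let ?E = "{v. v \<noteq> 0 \<and> (\<exists>c. c \<noteq> 0 \<and> P *v v = c *s v)}"
  let ?S = "vec.span ?E"
  let ?R = "range ((*v) P)"
  have ER: "?E \<subseteq> ?R"
  proof
    fix v assume "v \<in> ?E"
    then obtain c where c: "c \<noteq> 0" "P *v v = c *s v" by auto
    then have "P *v ((1/c) *s v) = v" by (simp add: mv_smult vector_smult_assoc)
    then show "v \<in> ?R" by (metis rangeI)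
  qed
  have SR: "?S \<subseteq> ?R" by (rule vec.span_minimal[OF ER range_vsub])
  have Rsub: "subspace ?R" by (rule vsub_sub[OF range_vsub])
  have Ssub: "subspace ?S" by (rule vsub_sub) (rule vec.subspace_span)
  have Sinv: "P *v x \<in> ?S" if "x \<in> ?S" for x
  proof -
    have "vec.subspace {x. P *v x \<in> ?S}"
      unfolding vec.subspace_def
      by (simp add: matrix_vector_right_distrib mv_smult vec.span_zero vec.span_add vec.span_scale)
    moreover have "?E \<subseteq> {x. P *v x \<in> ?S}"
    proof
      fix x assume xE: "x \<in> ?E"
      then obtain c where "P *v x = c *s x" by auto
      moreover have "x \<in> ?S" using xE by (rule vec.span_base)
      ultimately show "x \<in> {x. P *v x \<in> ?S}" by (simp add: vec.span_scale)
    qed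
    ultimately have "?S \<subseteq> {x. P *v x \<in> ?S}" by (rule vec.span_minimal[rotated])
    then show ?thesis using that by blast
  qed
  define Z where "Z = {w \<in> ?R. \<forall>s\<in>?S. inner w s = 0}"
  have Zsub: "subspace Z"
    unfolding subspace_def Z_def
    by (simp add: subspace_0[OF Rsub] subspace_add[OF Rsub] subspace_scale[OF Rsub] inner_add_left)
  have Zinv: "P *v z \<in> Z" if "z \<in> Z" for z
  proof -
    have "inner (P *v z) s = 0" if "s \<in> ?S" for s
      using herm_sym[OF h, of z s] Sinv[OF that] \<open>z \<in> Z\<close> by (simp add: Z_def)
    then show ?thesis by (auto simp: Z_def)
  qed
  have Z0: "z = 0" if zZ: "z \<in> Z" for z
  proof (rule ccontr)
    assume "z \<noteq> 0"
    from eigen_exists[OF h Zsub Zinv zZ this] obtain v l where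
      vZ: "v \<in> Z" and v0: "v \<noteq> 0" and ev: "P *v v = l *\<^sub>R v" by blast
    show False
    proof (cases "l = 0")
      case True
      then have Pv: "P *v v = 0" using ev by simp
      from vZ obtain u where u: "v = P *v u" by (auto simp: Z_def)
      have "inner v v = inner u (P *v v)" using herm_sym[OF h, of u v] u by simp
      then have "inner v v = 0" using Pv by simp
      with v0 show False by simp
    next
      case False
      have "P *v v = complex_of_real l *s v" using ev by (simp add: scaleR_smult)
      then have "v \<in> ?E" using v0 False by auto
      then have "v \<in> ?S" by (rule vec.span_base)
      then have "inner v v = 0" using vZ by (auto simp: Z_def)
      with v0 show False by simp
    qed
  qed
  have "?R \<subseteq> ?S"
  proof
    fix w assume wR: "w \<in> ?R"
    obtain y z where y: "y \<in> span ?S" and z: "\<And>x. x \<in> span ?S \<Longrightarrow> orthogonal z x"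
      and wyz: "w = y + z"
      by (rule orthogonal_subspace_decomp_exists[of ?S w]) blast
    have sp: "span ?S = ?S" using Ssub by simp
    have "z = w - y" using wyz by simp
    moreover have "y \<in> ?R" using y sp SR by auto
    ultimately have "z \<in> ?R" using subspace_diff[OF Rsub wR] by simp
    moreover have "\<forall>s\<in>?S. inner z s = 0" using z sp by (simp add: orthogonal_def)
    ultimately have "z \<in> Z" by (simp add: Z_def)
    then have "z = 0" by (rule Z0)
    then show "w \<in> ?S" using wyz y sp by simp
  qed
  with SR show ?thesis unfolding supp_def by blast
qed



lemma Gpow_ge_Fstr:
  assumes X: "positive_semidef X" and f: "set f \<subseteq> {1..m}"
  shows "positive_semidef ((Gmap m Es M1 ^^ length f) X - (1/real m)^length f *\<^sub>R Fstr Es M1 f X)"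
  using f
proof (induction f rule: rev_induct)
  case Nil then show ?case by (simp add: psd_zero)
next
  case (snoc k f)
  let ?G = "Gmap m Es M1"
  define Y where "Y = (?G ^^ length f) X"
  define F where "F = Fstr Es M1 f X"
  define c where "c = (1/real m)^length f"
  define D where "D = Y - c *\<^sub>R F"
  have D: "positive_semidef D" using snoc by (simp add: D_def Y_def F_def c_def)
  have F: "positive_semidef F" using X by (simp add: F_def Fstr_psd)
  have k: "k \<in> {1..m}" using snoc by simp
  have c0: "c \<ge> 0" by (simp add: c_def)
  have "?G F = (1/real m) *\<^sub>R (Fk Es M1 k F + (\<Sum>k'\<in>{1..m}-{k}. Fk Es M1 k' F))"
    unfolding Gmap_def using sum.remove[OF finite_atLeastAtMost k, of "\<lambda>k'. Fk Es M1 k' F"] by simp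
  moreover have "?G Y = ?G D + c *\<^sub>R ?G F"
  proof -
    have YD: "Y = D + c *\<^sub>R F" by (simp add: D_def)
    show ?thesis unfolding YD by (simp only: Gmap_add Gmap_scaleR)
  qed
  ultimately have eq: "?G Y - (c * (1/real m)) *\<^sub>R Fk Es M1 k F
      = ?G D + (c * (1/real m)) *\<^sub>R (\<Sum>k'\<in>{1..m}-{k}. Fk Es M1 k' F)"
    by (simp add: scaleR_add_right algebra_simps)
  have "positive_semidef (?G D + (c * (1/real m)) *\<^sub>R (\<Sum>k'\<in>{1..m}-{k}. Fk Es M1 k' F))"
    by (intro psd_add Gmap_psd D psd_scaleR psd_sum Fk_psd F) (use c0 in auto)
  then show ?case
    using eq by (simp add: Y_def F_def c_def Fstr_snoc mult.commute)
qed

lemma mv_sum: "finite S \<Longrightarrow> (A::complex^'n::finite^'m::finite) *v (\<Sum>x\<in>S. f x) = (\<Sum>x\<in>S. A *v f x)"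
  by (induction S rule: finite_induct) (simp_all add: matrix_vector_right_distrib)

lemma span_cols: "vec.span (range (\<lambda>j. (A::complex^'n::finite^'m::finite) *v axis j 1)) = range ((*v) A)"
proof
  show "vec.span (range (\<lambda>j. A *v axis j 1)) \<subseteq> range ((*v) A)"
    by (rule vec.span_minimal[OF _ range_vsub]) auto
  show "range ((*v) A) \<subseteq> vec.span (range (\<lambda>j. A *v axis j 1))"
  proof
    fix w assume "w \<in> range ((*v) A)"
    then obtain u where w: "w = A *v u" by auto
    have "w = A *v (\<Sum>j\<in>UNIV. u$j *s axis j 1)" using w by (simp add: basis_expansion)
    also have "\<dots> = (\<Sum>j\<in>UNIV. u$j *s (A *v axis j 1))" by (simp add: mv_sum mv_smult)
    finally show "w \<in> vec.span (range (\<lambda>j. A *v axis j 1))"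
      by (simp add: vec.span_sum vec.span_scale vec.span_base)
  qed
qed

lemma linear_adjoint: "linear adjoint"
  by (rule linearI) (simp_all add: adjoint_add adjoint_scaleR)

lemma linear_qf: "linear (\<lambda>X. Re (qf X v))"
  by (rule linearI) (simp_all add: qf_add qf_scaleR)

lemma linear_mvr: "linear (\<lambda>X::complex^'n::finite^'m::finite. X *v u)"
  by (rule linearI) (simp_all add: matrix_vector_mult_add_rdistrib scaleR_mv)

lemma bl: "linear (f::'a::euclidean_space \<Rightarrow> 'b::real_normed_vector) \<Longrightarrow> bounded_linear f"
  using linear_conv_bounded_linear by blast



theorem mainTheorem2:
  fixes m :: nat and Es :: "nat \<Rightarrow> (complex^'n^'n) list"
    and M0 M1 \<rho>0 :: "complex^'n^'n"
  assumes "is_concurrent_program m Es M0 M1"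
    and "density_operator \<rho>0"
  defines "A \<equiv> (mat 1 :: complex^('n\<times>'n)^('n\<times>'n)) - (1/2::real) *\<^sub>R Gmatrix m Es M1"
  defines "x \<equiv> matrix_inv A *v (kron \<rho>0 (mat 1) *v Phi)"
  defines "y \<equiv> (\<lambda>j. (\<chi> i. x $ (i, j)) :: complex^'n)"
  defines "\<rho> \<equiv> (\<Sum>i. (1/2::real) ^ i *\<^sub>R ((Gmap m Es M1 ^^ i) \<rho>0))"
  shows "invertible A
       \<and> vec.span (range y) = reachable_space m Es M1 \<rho>0
       \<and> summable (\<lambda>i. (1/2::real) ^ i *\<^sub>R ((Gmap m Es M1 ^^ i) \<rho>0))
       \<and> x = kron \<rho> (mat 1) *v Phi
       \<and> reachable_space m Es M1 \<rho>0 = supp \<rho>"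
proof -
  have P: "is_concurrent_program m Es M0 M1" using assms(1) .
  have r0: "positive_semidef \<rho>0" using assms(2) by (simp add: density_operator_def)
  have m1: "m \<ge> 1" using P by (simp add: is_concurrent_program_def)
  define Gm where "Gm = Gmap m Es M1"
  define S where "S = (\<lambda>i. (1/2::real)^i *\<^sub>R (Gm ^^ i) \<rho>0)"
  define C where "C = real CARD('n) * (real CARD('n) * Re (mtrace \<rho>0))"
  have Snorm: "norm (S i) \<le> C * (1/2)^i" for i
  proof -
    have "norm (S i) = (1/2)^i * norm ((Gm ^^ i) \<rho>0)" by (simp add: S_def)
    also have "\<dots> \<le> (1/2)^i * C"
      by (rule mult_left_mono) (use Gmap_pow_norm[OF P r0, of i] in \<open>simp_all add: Gm_def C_def\<close>)
    finally show ?thesis by (simp add: mult.commute)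
  qed
  have summS: "summable S"
    by (rule summable_comparison_test'[where N=0, OF summable_mult[OF summable_geometric]])
       (use Snorm in auto)
  have rho: "\<rho> = suminf S" by (simp add: \<rho>_def S_def Gm_def)
  have Spsd: "positive_semidef (S i)" for i
    unfolding S_def Gm_def by (intro psd_scaleR Gmap_pow_psd r0) simp
  have hermrho: "herm \<rho>"
  proof -
    have "adjoint \<rho> = (\<Sum>i. adjoint (S i))"
      using bounded_linear.suminf[OF bl[OF linear_adjoint] summS] rho by simp
    also have "\<dots> = \<rho>" using Spsd rho by (simp add: psd_def2 herm_def)
    finally show ?thesis by (simp add: herm_def)
  qed
  have GmRho: "Gm \<rho> = 2 *\<^sub>R (\<rho> - \<rho>0)"
  proof -
    have "Gm \<rho> = (\<Sum>i. Gm (S i))"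
      using bounded_linear.suminf[OF bl[OF linear_Gmap] summS] rho by (simp add: Gm_def)
    also have "(\<lambda>i. Gm (S i)) = (\<lambda>i. 2 *\<^sub>R S (Suc i))"
      by (rule ext) (simp add: S_def Gm_def Gmap_scaleR)
    also have "(\<Sum>i. 2 *\<^sub>R S (Suc i)) = 2 *\<^sub>R (\<Sum>i. S (Suc i))"
      using suminf_scaleR_right[of "\<lambda>i. S (Suc i)" 2] summS by (simp add: summable_Suc_iff)
    also have "(\<Sum>i. S (Suc i)) = \<rho> - \<rho>0"
      using suminf_split_head[OF summS] rho by (simp add: S_def)
    finally show ?thesis .
  qed
  have eq0: "\<rho> - (1/2::real) *\<^sub>R Gm \<rho> = \<rho>0" using GmRho by simp
  have Arho: "A *v vecm \<rho> = vecm \<rho>0"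
  proof -
    have "A *v vecm \<rho> = vecm \<rho> - (1/2::real) *\<^sub>R (Gmatrix m Es M1 *v vecm \<rho>)"
      by (simp add: A_def matrix_vector_mult_diff_rdistrib scaleR_mv)
    also have "\<dots> = vecm (\<rho> - (1/2::real) *\<^sub>R Gm \<rho>)"
      by (simp add: Gmatrix_vecm vecm_diff vecm_scaleR Gm_def)
    finally show ?thesis using eq0 by simp
  qed
  have inv: "invertible A" unfolding A_def by (rule A_invertible[OF P])
  have xeq: "x = vecm \<rho>"
  proof -
    have "x = matrix_inv A *v (A *v vecm \<rho>)" by (simp add: x_def kron_Phi Arho)
    also have "\<dots> = vecm \<rho>" by (simp add: matrix_vector_mul_assoc matrix_inv_left[OF inv])
    finally show ?thesis .
  qed
  have x2: "x = kron \<rho> (mat 1) *v Phi" by (simp add: xeq kron_Phi)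
  have yeq: "y = (\<lambda>j. \<rho> *v axis j 1)"
    by (rule ext) (simp add: y_def xeq vecm_def mv_axis)
  have spany: "vec.span (range y) = range ((*v) \<rho>)" by (simp add: yeq span_cols)
  let ?K = "{f. set f \<subseteq> {1..m}}"
  define F where "F = (\<lambda>f. Fstr Es M1 f \<rho>0)"
  have Fpsd: "positive_semidef (F f)" for f by (simp add: F_def Fstr_psd r0)
  have hermF: "herm (F f)" for f using Fpsd[of f] by (simp add: psd_def2)
  define R where "R = vec.span (\<Union>f\<in>?K. range ((*v) (F f)))"
  have reach: "reachable_space m Es M1 \<rho>0 = R"
  proof -
    have "(\<Union>f\<in>?K. supp (F f)) = (\<Union>f\<in>?K. range ((*v) (F f)))"
      by (intro SUP_cong refl supp_range hermF)
    then show ?thesis by (simp add: reachable_space_def R_def F_def)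
  qed
  have R1: "R \<subseteq> range ((*v) \<rho>)"
    unfolding R_def
  proof (rule vec.span_minimal[OF _ range_vsub], rule UN_least)
    fix f assume f: "f \<in> ?K"
    show "range ((*v) (F f)) \<subseteq> range ((*v) \<rho>)"
    proof (rule range_incl[OF hermrho hermF])
      fix v assume rv: "\<rho> *v v = 0"
      have q0: "Re (qf \<rho> v) = 0" by (simp add: qf_def cinner_def rv)
      have lq: "bounded_linear (\<lambda>X. Re (qf X v))" by (rule bl[OF linear_qf])
      have "Re (qf \<rho> v) = (\<Sum>i. Re (qf (S i) v))"
        using bounded_linear.suminf[OF lq summS] rho by simp
      then have s0: "(\<Sum>i. Re (qf (S i) v)) = 0" using q0 by simp
      have sm: "summable (\<lambda>i. Re (qf (S i) v))" by (rule bounded_linear.summable[OF lq summS])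
      have nn: "\<And>i. 0 \<le> Re (qf (S i) v)" using Spsd by (simp add: psd_def2)
      have all0: "\<forall>i. Re (qf (S i) v) = 0" using suminf_eq_zero_iff[OF sm nn] s0 by simp
      define n where "n = length f"
      have "Re (qf (S n) v) = (1/2)^n * Re (qf ((Gm ^^ n) \<rho>0) v)"
        by (simp add: S_def qf_scaleR)
      then have g0: "Re (qf ((Gm ^^ n) \<rho>0) v) = 0" using all0 by simp
      have D: "positive_semidef ((Gm ^^ n) \<rho>0 - (1/real m)^n *\<^sub>R F f)"
        using Gpow_ge_Fstr[OF r0, of f m Es M1] f by (simp add: Gm_def n_def F_def)
      then have "0 \<le> Re (qf ((Gm ^^ n) \<rho>0 - (1/real m)^n *\<^sub>R F f) v)" by (simp add: psd_def2)
      then have "(1/real m)^n * Re (qf (F f) v) \<le> 0" using g0 by (simp add: qf_diff qf_scaleR)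
      moreover have "(1/real m)^n > 0" using m1 by simp
      moreover have "0 \<le> Re (qf (F f) v)" using Fpsd by (simp add: psd_def2)
      ultimately have "Re (qf (F f) v) \<le> 0" by (simp add: mult_le_0_iff)
      then have "Re (qf (F f) v) = 0" using \<open>0 \<le> Re (qf (F f) v)\<close> by simp
      then show "F f *v v = 0" by (rule psd_ker[OF Fpsd])
    qed
  qed
  have R2: "range ((*v) \<rho>) \<subseteq> R"
  proof
    fix w assume "w \<in> range ((*v) \<rho>)"
    then obtain u where w: "w = \<rho> *v u" by auto
    have Rsub: "subspace R" unfolding R_def by (rule vsub_sub) (rule vec.subspace_span)
    have Rcl: "closed R" by (rule closed_subspace[OF Rsub])
    let ?Fs = "F ` ?K"
    have GFs: "Gm X \<in> span ?Fs" if "X \<in> span ?Fs" for X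
    proof -
      have "subspace {X. Gm X \<in> span ?Fs}"
        unfolding subspace_def
        by (simp add: Gm_def Gmap_add Gmap_scaleR span_add span_scale span_zero linear_0[OF linear_Gmap])
      moreover have "?Fs \<subseteq> {X. Gm X \<in> span ?Fs}"
      proof
        fix Y assume "Y \<in> ?Fs"
        then obtain f where f: "f \<in> ?K" and Y: "Y = F f" by auto
        have GY: "Gm Y = (1/real m) *\<^sub>R (\<Sum>k\<in>{1..m}. F (f @ [k]))"
          by (simp add: Y Gm_def Gmap_def F_def Fstr_snoc)
        have mem: "F (f @ [k]) \<in> span ?Fs" if "k \<in> {1..m}" for k
          using f that by (intro span_base imageI) auto
        have "Gm Y \<in> span ?Fs" unfolding GY by (intro span_scale span_sum mem)
        then show "Y \<in> {X. Gm X \<in> span ?Fs}" by simp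
      qed
      ultimately have "span ?Fs \<subseteq> {X. Gm X \<in> span ?Fs}" by (rule span_minimal[rotated])
      then show ?thesis using that by blast
    qed
    have pows: "(Gm ^^ i) \<rho>0 \<in> span ?Fs" for i
    proof (induction i)
      case 0
      have "F [] \<in> ?Fs" by auto
      then show ?case by (simp add: F_def span_base)
    next
      case (Suc i) then show ?case using GFs by simp
    qed
    have colR: "X *v u \<in> R" if "X \<in> span ?Fs" for X
    proof -
      have "subspace {X. X *v u \<in> R}"
        unfolding subspace_def
        by (simp add: matrix_vector_mult_add_rdistrib scaleR_mv subspace_0[OF Rsub]
            subspace_add[OF Rsub] subspace_scale[OF Rsub])
      moreover have "?Fs \<subseteq> {X. X *v u \<in> R}"
        unfolding R_def by (auto intro!: vec.span_base)
      ultimately have "span ?Fs \<subseteq> {X. X *v u \<in> R}" by (rule span_minimal[rotated])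
      then show ?thesis using that by blast
    qed
    have SuR: "S i *v u \<in> R" for i
      unfolding S_def by (intro colR span_scale pows)
    have lmv: "bounded_linear (\<lambda>X. X *v u)" by (rule bl[OF linear_mvr])
    have wsum: "w = (\<Sum>i. S i *v u)" using bounded_linear.suminf[OF lmv summS] rho w by simp
    have "summable (\<lambda>i. S i *v u)" by (rule bounded_linear.summable[OF lmv summS])
    then have lim: "(\<lambda>n. \<Sum>i<n. S i *v u) \<longlonglongrightarrow> w" using summable_LIMSEQ wsum by simp
    have ps: "(\<Sum>i<n. S i *v u) \<in> R" for n by (rule subspace_sum[OF Rsub SuR])
    show "w \<in> R" by (rule closed_sequentially[OF Rcl ps lim])
  qed
  have Req: "R = range ((*v) \<rho>)" using R1 R2 by blast
  have supprho: "supp \<rho> = range ((*v) \<rho>)" by (rule supp_range[OF hermrho])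
  have s2: "summable (\<lambda>i. (1/2::real)^i *\<^sub>R (Gmap m Es M1 ^^ i) \<rho>0)"
    using summS by (simp add: S_def Gm_def)
  have e1: "vec.span (range y) = reachable_space m Es M1 \<rho>0" using spany reach Req by simp
  have e2: "reachable_space m Es M1 \<rho>0 = supp \<rho>" using reach Req supprho by simp
  show ?thesis by (intro conjI inv e1 s2 x2 e2)
qed



end
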